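(* Let $f:\mathbb{R}^n\times D\to\mathbb{R}^n$ and a forcing function $d:[0,\infty)\to D$ be given, and consider the Cauchy problem $\dot y(t)=f(y(t),d(t))$, $y(t_0)=y_0$. Denote its exact solution by $\tilde y(t,y_0,t_0)$ (so $\tilde y(t_0,y_0,t_0)=y_0$). Let $M\subset\mathbb{R}^n$ be a manifold such that $\tilde y(t,y_0,t_0)\in M$ for all $t\ge t_0$ and all $y_0\in M$. Let $y_0\in M$ and let $y(t)=\tilde y(t,y_0,0)$ be the exact solution with initial time $0$. Assume $y$ is locally exponentially stable on $M$, i.e. there exist $\delta>0$, $\gamma>0$, $C_1<\infty$ such that $$\|\tilde y(t,y^{(1)}_0,t_0)-\tilde y(t,y^{(2)}_0,t_0)\|\le C_1 e^{-\gamma(t-t_0)}\|y^{(1)}_0-y^{(2)}_0\|$$ for all $t\ge t_0\ge 0$ and all $y^{(1)}_0,y^{(2)}_0\in M$ with $\|y^{(1)}_0-y(t_0)\|\le\delta$, $\|y^{(2)}_0-y(t_0)\|\le\delta$. Consider a numerical algorithm on $[0,T]$ with constant time step $\Delta t>0$, time instances ${}^n t=n\Delta t$, $n=0,1,\dots,N$, ${}^N t=T$, producing approximations ${}^n y$ with ${}^0 y=y_0$, such that for some constant $C_2<\infty$ the one-step error satisfies $$\|\tilde y({}^{n+1}t,{}^n y,{}^n t)-{}^{n+1}y\|\le C_2(\Delta t)^2\quad\text{for all } n,$$ and such that every numerical approximation lies exactly on the manifold, ${}^n y\in M$ for all $n$. Then there exists a constant $C<\infty$, not depending on the length $T$ of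 the time interval, such that $\|{}^n y-y({}^n t)\|\le C\,\Delta t$ for all $n$, as $\Delta t\to 0$.
   Context: $\|\cdot\|$ denotes a norm on $\mathbb{R}^n$. The system is a system with input: $d(t)$ is a given forcing function, and the initial value is given. "As $\Delta t\to0$" means the estimate holds for all sufficiently small $\Delta t$. *)

theory Defs
  imports "HOL-Analysis.Analysis"
begin

definition solves_ivp :: "('a::real_normed_vector \<Rightarrow> 'd \<Rightarrow> 'a) \<Rightarrow> (real \<Rightarrow> 'd) \<Rightarrow> real \<Rightarrow> 'a \<Rightarrow> (real \<Rightarrow> 'a) \<Rightarrow> bool" where
  "solves_ivp f d t0 y0 z \<longleftrightarrow> z t0 = y0 \<and>
     (\<forall>t\<ge>t0. (z has_vector_derivative f (z t) (d t)) (at t within {t0..}))"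

definition exact_solution_map :: "('a::real_normed_vector \<Rightarrow> 'd \<Rightarrow> 'a) \<Rightarrow> (real \<Rightarrow> 'd) \<Rightarrow> 'a set \<Rightarrow> (real \<Rightarrow> 'a \<Rightarrow> real \<Rightarrow> 'a) \<Rightarrow> bool" where
  "exact_solution_map f d M ytil \<longleftrightarrow>
     (\<forall>t0\<ge>0. \<forall>y0\<in>M. solves_ivp f d t0 y0 (\<lambda>t. ytil t y0 t0) \<and>
        (\<forall>z. solves_ivp f d t0 y0 z \<longrightarrow> (\<forall>t\<ge>t0. z t = ytil t y0 t0)))"

end

theory Submission
  imports Defs
begin

lemma ex_init:
  assumes "exact_solution_map f d M ytil" "0 \<le> t0" "x \<in> M"
  shows "ytil t0 x t0 = x"
  using assms unfolding exact_solution_map_def solves_ivp_def by blast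

lemma ex_semi:
  assumes ex: "exact_solution_map f d M ytil"
    and inv: "\<And>t0 x t. 0 \<le> t0 \<Longrightarrow> x \<in> M \<Longrightarrow> t0 \<le> t \<Longrightarrow> ytil t x t0 \<in> M"
    and "0 \<le> s" "s \<le> t" "t \<le> u" "x \<in> M"
  shows "ytil u x s = ytil u (ytil t x s) t"
proof -
  have sol: "solves_ivp f d s x (\<lambda>r. ytil r x s)"
    using ex assms unfolding exact_solution_map_def by blast
  have zM: "ytil t x s \<in> M" using inv assms by blast
  have "solves_ivp f d t (ytil t x s) (\<lambda>r. ytil r x s)"
    unfolding solves_ivp_def
  proof (intro conjI allI impI)
    fix r assume "t \<le> r"
    then have "((\<lambda>r. ytil r x s) has_vector_derivative f (ytil r x s) (d r)) (at r within {s..})"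
      using sol assms unfolding solves_ivp_def by auto
    then show "((\<lambda>r. ytil r x s) has_vector_derivative f (ytil r x s) (d r)) (at r within {t..})"
      by (rule has_vector_derivative_within_subset) (use assms in auto)
  qed simp
  then show ?thesis
    using ex zM assms unfolding exact_solution_map_def by fastforce
qed

theorem theorem1:
  fixes f :: "'a::real_normed_vector \<Rightarrow> 'd \<Rightarrow> 'a"
    and d :: "real \<Rightarrow> 'd"
    and ytil :: "real \<Rightarrow> 'a \<Rightarrow> real \<Rightarrow> 'a"
    and M :: "'a set"
    and y0 :: 'a
    and Y :: "real \<Rightarrow> nat \<Rightarrow> nat \<Rightarrow> 'a"
    and \<delta> \<gamma> C1 C2 :: real
  assumes exact: "exact_solution_map f d M ytil"
    and invariant: "\<And>t0 x t. 0 \<le> t0 \<Longrightarrow> x \<in> M \<Longrightarrow> t0 \<le> t \<Longrightarrow> ytil t x t0 \<in> M"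
    and y0M: "y0 \<in> M"
    and delta_pos: "\<delta> > 0" and gamma_pos: "\<gamma> > 0"
    and stable: "\<And>t t0 x1 x2. 0 \<le> t0 \<Longrightarrow> t0 \<le> t \<Longrightarrow> x1 \<in> M \<Longrightarrow> x2 \<in> M \<Longrightarrow>
        norm (x1 - ytil t0 y0 0) \<le> \<delta> \<Longrightarrow> norm (x2 - ytil t0 y0 0) \<le> \<delta> \<Longrightarrow>
        norm (ytil t x1 t0 - ytil t x2 t0) \<le> C1 * exp (- \<gamma> * (t - t0)) * norm (x1 - x2)"
    and init: "\<And>h N. h > 0 \<Longrightarrow> Y h N 0 = y0"
    and local_err: "\<And>h N n. h > 0 \<Longrightarrow> n < N \<Longrightarrow>
        norm (ytil (real (Suc n) * h) (Y h N n) (real n * h) - Y h N (Suc n)) \<le> C2 * h\<^sup>2"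
    and onM: "\<And>h N n. h > 0 \<Longrightarrow> n \<le> N \<Longrightarrow> Y h N n \<in> M"
  shows "\<exists>C h0. h0 > 0 \<and> (\<forall>h N n. 0 < h \<longrightarrow> h < h0 \<longrightarrow> n \<le> N \<longrightarrow>
            norm (Y h N n - ytil (real n * h) y0 0) \<le> C * h)"
proof -
  define K where "K = max \<bar>C1\<bar> 1"
  define A where "A = \<bar>C2\<bar>"
  define C where "C = K * A * exp 1 / \<gamma>"
  define h0 where "h0 = min (1/\<gamma>) (\<delta> / (K * (C + 1)))"
  have K1: "K \<ge> 1" unfolding K_def by simp
  have A0: "A \<ge> 0" unfolding A_def by simp
  have C0: "C \<ge> 0" unfolding C_def using K1 A0 gamma_pos by simp
  have h0pos: "h0 > 0" unfolding h0_def using gamma_pos delta_pos K1 C0 by simp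
  have stab': "norm (ytil t x1 t0 - ytil t x2 t0) \<le> K * exp (- \<gamma> * (t - t0)) * norm (x1 - x2)"
    if "0 \<le> t0" "t0 \<le> t" "x1 \<in> M" "x2 \<in> M"
      "norm (x1 - ytil t0 y0 0) \<le> \<delta>" "norm (x2 - ytil t0 y0 0) \<le> \<delta>" for t t0 x1 x2
  proof -
    have "norm (ytil t x1 t0 - ytil t x2 t0) \<le> C1 * exp (- \<gamma> * (t - t0)) * norm (x1 - x2)"
      using stable that by blast
    also have "\<dots> \<le> K * exp (- \<gamma> * (t - t0)) * norm (x1 - x2)"
      by (intro mult_right_mono) (auto simp: K_def)
    finally show ?thesis .
  qed
  have main: "norm (Y h N n - ytil (real n * h) y0 0) \<le> C * h"
    if hpos: "0 < h" and hh0: "h < h0" and nN: "n \<le> N" for h N n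
  proof -
    define t where "t k = real k * h" for k
    define e where "e k = Y h N k - ytil (t k) y0 0" for k
    define q where "q = exp (- \<gamma> * h)"
    have t0: "t k \<ge> 0" for k unfolding t_def using hpos by simp
    have tmono: "k \<le> m \<Longrightarrow> t k \<le> t m" for k m unfolding t_def using hpos
      by (simp add: mult_right_mono)
    have yM: "ytil (t k) y0 0 \<in> M" for k using invariant y0M t0 by simp
    have q0: "0 < q" and q1: "q < 1" unfolding q_def using gamma_pos hpos by auto
    have hg: "\<gamma> * h \<le> 1" using hh0 gamma_pos unfolding h0_def
      by (simp add: field_simps)
    have KCh: "K * (C * h) \<le> \<delta>"
    proof -
      have "h < \<delta> / (K * (C + 1))" using hh0 unfolding h0_def by simp
      moreover have "K * (C + 1) > 0" using K1 C0 by simp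
      ultimately have "h * (K * (C + 1)) < \<delta>" by (simp add: pos_less_divide_eq)
      then have "K * (C + 1) * h < \<delta>" by (simp add: mult.commute)
      moreover have "K * (C * h) \<le> K * (C + 1) * h" using K1 hpos by (simp add: field_simps)
      ultimately show ?thesis by linarith
    qed
    have Ch: "C * h \<le> \<delta>"
    proof -
      have "C * h \<le> K * (C * h)" using K1 C0 hpos
        using mult_right_mono[of 1 K "C * h"] by simp
      then show ?thesis using KCh by linarith
    qed
    have geo: "K * A * h\<^sup>2 / (1 - q) \<le> C * h"
    proof -
      have ee: "exp (\<gamma> * h) \<ge> 1 + \<gamma> * h" by (rule exp_ge_add_one_self)
      have "1 - q = (exp (\<gamma> * h) - 1) * exp (- (\<gamma> * h))"
        unfolding q_def by (simp add: algebra_simps exp_minus field_simps)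
      also have "\<dots> \<ge> (\<gamma> * h) * exp (- 1)"
      proof (rule mult_mono)
        show "\<gamma> * h \<le> exp (\<gamma> * h) - 1" using ee by linarith
        show "exp (- 1) \<le> exp (- (\<gamma> * h))" using hg by simp
      qed (use gamma_pos hpos in auto)
      finally have lq: "1 - q \<ge> \<gamma> * h * exp (-1)" .
      have pos: "\<gamma> * h * exp (-1) > 0" using gamma_pos hpos by simp
      have "K * A * h\<^sup>2 / (1 - q) \<le> K * A * h\<^sup>2 / (\<gamma> * h * exp (-1))"
        using lq pos K1 A0 by (intro divide_left_mono) auto
      also have "\<dots> = C * h" unfolding C_def using hpos gamma_pos
        by (simp add: exp_minus field_simps power2_eq_square)
      finally show ?thesis .
    qed
    have "\<forall>m. m \<le> N \<longrightarrow> m = n \<longrightarrow> norm (e m) \<le> C * h"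
    proof (induction n rule: less_induct)
      case (less n)
      show ?case
      proof (intro allI impI)
        fix m assume mN: "m \<le> N" and mn: "m = n"
        have IH: "j < n \<Longrightarrow> norm (e j) \<le> C * h" for j using less mN mn by auto
        define W where "W j = ytil (t n) (Y h N j) (t j)" for j
        have Wn: "W n = Y h N n" unfolding W_def using ex_init[OF exact t0] onM hpos mN mn by simp
        have W0: "W 0 = ytil (t n) y0 0" unfolding W_def using init hpos by (simp add: t_def)
        have termb: "norm (W (Suc j) - W j) \<le> K * A * h\<^sup>2 * q ^ (n - Suc j)" if jn: "j < n" for j
        proof -
          define Z where "Z = ytil (t (Suc j)) (Y h N j) (t j)"
          have YjM: "Y h N j \<in> M" using onM hpos jn mN mn by simp
          have YsM: "Y h N (Suc j) \<in> M" using onM hpos jn mN mn by simp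
          have ZM: "Z \<in> M" unfolding Z_def using invariant t0 YjM tmono by simp
          have loc: "norm (Y h N (Suc j) - Z) \<le> A * h\<^sup>2"
          proof -
            have "norm (Z - Y h N (Suc j)) \<le> C2 * h\<^sup>2" unfolding Z_def t_def
              using local_err hpos jn mN mn by simp
            also have "\<dots> \<le> A * h\<^sup>2" unfolding A_def by (intro mult_right_mono) auto
            finally show ?thesis by (simp add: norm_minus_commute)
          qed
          have ej: "norm (e j) \<le> C * h" using IH jn .
          have ejd: "norm (Y h N j - ytil (t j) y0 0) \<le> \<delta>" using ej Ch unfolding e_def by simp
          have ysemi: "ytil (t (Suc j)) y0 0 = ytil (t (Suc j)) (ytil (t j) y0 0) (t j)"
            using ex_semi[OF exact invariant, of 0 "t j" "t (Suc j)" y0] t0 tmono y0M by simp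
          have Zd: "norm (Z - ytil (t (Suc j)) y0 0) \<le> \<delta>"
          proof -
            have "norm (Z - ytil (t (Suc j)) y0 0)
                \<le> K * exp (- \<gamma> * (t (Suc j) - t j)) * norm (Y h N j - ytil (t j) y0 0)"
              unfolding Z_def ysemi
              by (rule stab') (use t0 tmono YjM yM ejd delta_pos in auto)
            also have "\<dots> \<le> K * 1 * norm (e j)" unfolding e_def
              using K1 gamma_pos tmono[of j "Suc j"]
              by (intro mult_right_mono mult_left_mono) auto
            also have "\<dots> \<le> K * (C * h)" using ej K1 by simp
            finally show ?thesis using KCh by linarith
          qed
          have Wj: "W j = ytil (t n) Z (t (Suc j))" unfolding W_def Z_def
            using ex_semi[OF exact invariant, of "t j" "t (Suc j)" "t n" "Y h N j"] t0 tmono YjM jn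
            by simp
          show ?thesis
          proof (cases "Suc j = n")
            case True
            have "W j = Z" unfolding Wj using True ex_init[OF exact t0 ZM] by simp
            then have "norm (W (Suc j) - W j) \<le> A * h\<^sup>2" using loc True Wn by simp
            also have "\<dots> \<le> K * A * h\<^sup>2 * q ^ (n - Suc j)" using True K1 A0
              mult_right_mono[of 1 K "A * h\<^sup>2"] by (simp add: mult.assoc)
            finally show ?thesis .
          next
            case False
            then have sjn: "Suc j < n" using jn by simp
            have esj: "norm (Y h N (Suc j) - ytil (t (Suc j)) y0 0) \<le> \<delta>"
              using IH[OF sjn] Ch unfolding e_def by simp
            have "norm (W (Suc j) - W j) \<le> K * exp (- \<gamma> * (t n - t (Suc j))) * norm (Y h N (Suc j) - Z)"
              unfolding Wj W_def[of "Suc j"]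
              by (rule stab') (use t0 tmono YsM ZM esj Zd sjn in auto)
            also have "exp (- \<gamma> * (t n - t (Suc j))) = q ^ (n - Suc j)"
            proof -
              have "- \<gamma> * (t n - t (Suc j)) = real (n - Suc j) * (- \<gamma> * h)"
                unfolding t_def using sjn by (simp add: of_nat_diff algebra_simps)
              then show ?thesis unfolding q_def by (simp only: exp_of_nat_mult)
            qed
            also have "K * q ^ (n - Suc j) * norm (Y h N (Suc j) - Z) \<le> K * q ^ (n - Suc j) * (A * h\<^sup>2)"
              using loc K1 q0 by (intro mult_left_mono) auto
            finally show ?thesis by (simp add: algebra_simps)
          qed
        qed
        have "e n = (\<Sum>j<n. W (Suc j) - W j)"
          unfolding sum_lessThan_telescope e_def using Wn W0 by simp
        then have "norm (e n) \<le> (\<Sum>j<n. norm (W (Suc j) - W j))"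
          by (simp add: norm_sum)
        also have "\<dots> \<le> (\<Sum>j<n. K * A * h\<^sup>2 * q ^ (n - Suc j))"
          by (intro sum_mono termb) simp
        also have "\<dots> = K * A * h\<^sup>2 * (\<Sum>j<n. q ^ (n - Suc j))"
          by (simp add: sum_distrib_left)
        also have "(\<Sum>j<n. q ^ (n - Suc j)) = (\<Sum>i<n. q ^ i)"
          by (rule sum.nat_diff_reindex)
        also have "(\<Sum>i<n. q ^ i) = (1 - q ^ n) / (1 - q)"
          using q1 by (simp add: sum_gp_strict)
        also have "K * A * h\<^sup>2 * ((1 - q ^ n) / (1 - q)) \<le> K * A * h\<^sup>2 / (1 - q)"
        proof -
          have "(1 - q ^ n) / (1 - q) \<le> 1 / (1 - q)" using q0 q1
            by (intro divide_right_mono) auto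
          then have "K * A * h\<^sup>2 * ((1 - q ^ n) / (1 - q)) \<le> K * A * h\<^sup>2 * (1 / (1 - q))"
            using K1 A0 by (intro mult_left_mono) auto
          then show ?thesis by simp
        qed
        also have "\<dots> \<le> C * h" by (rule geo)
        finally show "norm (e m) \<le> C * h" using mn by simp
      qed
    qed
    then show ?thesis using nN unfolding e_def t_def by simp
  qed
  show ?thesis using h0pos main by blast
qed

end
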